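(* Let $\mathcal{M}=(\mathcal{S},\mathcal{A},p,r,\gamma)$ be a finite MDP with discount $\gamma\in[0,1)$ whose action space is factored as $\mathcal{A}=\mathcal{A}_1\times\cdots\times\mathcal{A}_D$, and let $\pi:\mathcal{S}\to\Delta(\mathcal{A})$ be a policy. Suppose there exist state abstractions $\phi_d:\mathcal{S}\to\mathcal{Z}_d$ ($d=1,\dots,D$), writing $\boldsymbol{\phi}=(\phi_1,\dots,\phi_D)$, $z_d=\phi_d(s)$, $z'_d=\phi_d(s')$, together with functions $p_d:\mathcal{Z}_d\times\mathcal{A}_d\to\Delta(\mathcal{Z}_d)$, $r_d:\mathcal{Z}_d\times\mathcal{A}_d\to\mathbb{R}$ and $\pi_d:\mathcal{Z}_d\to\Delta(\mathcal{A}_d)$, such that for all $s,s'\in\mathcal{S}$ and all $\boldsymbol{a}=(a_1,\dots,a_D)\in\mathcal{A}$: (i) $\sum_{\tilde{s}\in\boldsymbol{\phi}^{-1}(\boldsymbol{\phi}(s'))} p(\tilde{s}\mid s,\boldsymbol{a})=\prod_{d=1}^D p_d(z'_d\mid z_d,a_d)$; (ii) $r(s,\boldsymbol{a})=\sum_{d=1}^D r_d(z_d,a_d)$; (iii) $\pi(\boldsymbol{a}\mid s)=\prod_{d=1}^D\pi_d(a_d\mid z_d)$. Then there exist functions $q_d:\mathcal{S}\times\mathcal{A}_d\to\mathbb{R}$ ($d=1,\dots,D$) such that $Q^\pi(s,\boldsymbol{a})=\sum_{d=1}^D q_d(s,a_d)$ for all $s\in\mathcal{S}$, $\boldsymbo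l{a}\in\mathcal{A}$.
   Context: An MDP $(\mathcal{S},\mathcal{A},p,r,\gamma)$ has transition kernel $p(s'\mid s,a)$, deterministic reward $r(s,a)$ and discount $\gamma$. For a policy $\pi$ (a map from states to distributions over actions), $Q^\pi(s,a)=\mathbb{E}\big[\sum_{t\ge1}\gamma^{t-1}r(s_t,a_t)\mid s_1=s,a_1=a\big]$ where $s_{t+1}\sim p(\cdot\mid s_t,a_t)$ and $a_{t}\sim\pi(\cdot\mid s_t)$ for $t\ge2$. A state abstraction is a map $\phi:\mathcal{S}\to\mathcal{Z}$; for $\boldsymbol{\phi}=(\phi_1,\dots,\phi_D)$ and $\boldsymbol{z}=(z_1,\dots,z_D)$, $\boldsymbol{\phi}^{-1}(\boldsymbol{z})=\{\tilde s\in\mathcal{S}:\phi_d(\tilde s)=z_d\ \forall d\}$. An action $\boldsymbol{a}\in\mathcal{A}_1\times\cdots\times\mathcal{A}_D$ is written as its vector of sub-actions $(a_1,\dots,a_D)$. *)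

theory Defs
  imports "HOL-Probability.Probability"
begin

definition factored_actions :: "nat \<Rightarrow> (nat \<Rightarrow> 'b set) \<Rightarrow> (nat \<Rightarrow> 'b) set" where
  "factored_actions D A = PiE {..<D} A"

text \<open>Distribution of the state-action pair (s_{n+1}, a_{n+1}) given s_1 = s, a_1 = a,
where s_{t+1} ~ p(. | s_t, a_t) and a_t ~ pi(. | s_t) for t >= 2.\<close>

primrec sa_dist :: "('s \<Rightarrow> 'a \<Rightarrow> 's pmf) \<Rightarrow> ('s \<Rightarrow> 'a pmf) \<Rightarrow> 's \<Rightarrow> 'a \<Rightarrow> nat \<Rightarrow> ('s \<times> 'a) pmf" where
  "sa_dist p pol s a 0 = return_pmf (s, a)"
| "sa_dist p pol s a (Suc n) =
     bind_pmf (sa_dist p pol s a n)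
       (\<lambda>(st, act). bind_pmf (p st act) (\<lambda>s'. map_pmf (\<lambda>a'. (s', a')) (pol s')))"

definition Qpi :: "('s \<Rightarrow> 'a \<Rightarrow> 's pmf) \<Rightarrow> ('s \<Rightarrow> 'a \<Rightarrow> real) \<Rightarrow> real \<Rightarrow> ('s \<Rightarrow> 'a pmf)
                    \<Rightarrow> 's \<Rightarrow> 'a \<Rightarrow> real" where
  "Qpi p r \<gamma> pol s a =
     (\<Sum>n. \<gamma> ^ n * measure_pmf.expectation (sa_dist p pol s a n) (\<lambda>(st, act). r st act))"

end

theory Submission imports Defs begin

lemma pmf_eq_on_finite:
  fixes P Q :: "'x pmf"
  assumes "finite S" "set_pmf P \<subseteq> S" "\<And>w. w \<in> S \<Longrightarrow> pmf P w = pmf Q w"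
  shows "P = Q"
proof -
  have "measure_pmf.prob Q S = sum (pmf Q) S"
    using assms(1) by (simp add: measure_measure_pmf_finite)
  also have "\<dots> = sum (pmf P) S" using assms(3) by simp
  also have "\<dots> = 1" using assms(1,2) by (simp add: sum_pmf_eq_1)
  finally have "measure_pmf.prob Q S = 1" .
  hence "AE x in measure_pmf Q. x \<in> S"
    by (subst (asm) measure_pmf.prob_eq_1) auto
  hence QS: "set_pmf Q \<subseteq> S" by (auto simp: AE_measure_pmf_iff)
  show ?thesis
  proof (rule pmf_eqI)
    fix i show "pmf P i = pmf Q i"
    proof (cases "i \<in> S")
      case True then show ?thesis using assms(3) by simp
    next
      case False
      then have "i \<notin> set_pmf P" "i \<notin> set_pmf Q" using assms(2) QS by auto
      then show ?thesis by (simp add: set_pmf_eq)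
    qed
  qed
qed

lemma sa_dist_supp:
  assumes "a \<in> F" "\<And>s. set_pmf (pol s) \<subseteq> F"
  shows "set_pmf (sa_dist p pol s a n) \<subseteq> UNIV \<times> F"
  proof (induction n)
  case (Suc n)
  then show ?case using assms(2) by (fastforce simp: set_bind_pmf)
qed (use assms in simp)

lemma sa_dist_proj:
  fixes prj :: "'s \<times> 'a \<Rightarrow> 'z \<times> 'b"
  assumes "a \<in> F" "\<And>s. set_pmf (pol s) \<subseteq> F"
    and step: "\<And>st act. act \<in> F \<Longrightarrow>
       map_pmf prj (bind_pmf (p st act) (\<lambda>s'. map_pmf (\<lambda>a'. (s', a')) (pol s')))
       = (case prj (st, act) of (z, b) \<Rightarrow> bind_pmf (p2 z b) (\<lambda>s'. map_pmf (\<lambda>a'. (s', a')) (pol2 s')))"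
  shows "map_pmf prj (sa_dist p pol s a n) = sa_dist p2 pol2 (fst (prj (s,a))) (snd (prj (s,a))) n"
proof (induction n)
  case 0
  then show ?case by simp
next
  case (Suc n)
  have "map_pmf prj (sa_dist p pol s a (Suc n)) =
     bind_pmf (sa_dist p pol s a n) (\<lambda>x. map_pmf prj ((\<lambda>(st, act). bind_pmf (p st act) (\<lambda>s'. map_pmf (\<lambda>a'. (s', a')) (pol s'))) x))"
    by (simp add: map_bind_pmf)
  also have "\<dots> = bind_pmf (sa_dist p pol s a n) (\<lambda>x. (\<lambda>(z, b). bind_pmf (p2 z b) (\<lambda>s'. map_pmf (\<lambda>a'. (s', a')) (pol2 s'))) (prj x))"
  proof (rule bind_pmf_cong[OF refl])
    fix x assume "x \<in> set_pmf (sa_dist p pol s a n)"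
    then have "snd x \<in> F" using sa_dist_supp[of a F pol p s n] assms(1,2) by auto
    then show "map_pmf prj ((\<lambda>(st, act). bind_pmf (p st act) (\<lambda>s'. map_pmf (\<lambda>a'. (s', a')) (pol s'))) x)
      = (\<lambda>(z, b). bind_pmf (p2 z b) (\<lambda>s'. map_pmf (\<lambda>a'. (s', a')) (pol2 s'))) (prj x)"
      using step[of "snd x" "fst x"] by (cases x) (auto split: prod.splits)
  qed
  also have "\<dots> = bind_pmf (map_pmf prj (sa_dist p pol s a n)) (\<lambda>(z, b). bind_pmf (p2 z b) (\<lambda>s'. map_pmf (\<lambda>a'. (s', a')) (pol2 s')))"
    by (simp add: bind_map_pmf)
  also have "\<dots> = sa_dist p2 pol2 (fst (prj (s,a))) (snd (prj (s,a))) (Suc n)"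
    using Suc by simp
  finally show ?case .
qed

theorem theorem1:
  fixes p :: "'s::finite \<Rightarrow> (nat \<Rightarrow> 'b) \<Rightarrow> 's pmf"
    and r :: "'s \<Rightarrow> (nat \<Rightarrow> 'b) \<Rightarrow> real"
    and \<gamma> :: real
    and D :: nat
    and A :: "nat \<Rightarrow> 'b set"
    and pol :: "'s \<Rightarrow> (nat \<Rightarrow> 'b) pmf"
    and \<phi> :: "nat \<Rightarrow> 's \<Rightarrow> 'z"
    and pd :: "nat \<Rightarrow> 'z \<Rightarrow> 'b \<Rightarrow> 'z pmf"
    and rd :: "nat \<Rightarrow> 'z \<Rightarrow> 'b \<Rightarrow> real"
    and pold :: "nat \<Rightarrow> 'z \<Rightarrow> 'b pmf"
  assumes gamma: "0 \<le> \<gamma>" "\<gamma> < 1"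
    and A_fin: "\<And>d. d < D \<Longrightarrow> finite (A d)"
    and pol_supp: "\<And>s. set_pmf (pol s) \<subseteq> factored_actions D A"
    and pold_supp: "\<And>d z. d < D \<Longrightarrow> set_pmf (pold d z) \<subseteq> A d"
    and trans_fact: "\<And>s s' a. a \<in> factored_actions D A \<Longrightarrow>
        (\<Sum>st\<in>{st. \<forall>d<D. \<phi> d st = \<phi> d s'}. pmf (p s a) st)
          = (\<Prod>d<D. pmf (pd d (\<phi> d s) (a d)) (\<phi> d s'))"
    and rew_fact: "\<And>s a. a \<in> factored_actions D A \<Longrightarrow>
        r s a = (\<Sum>d<D. rd d (\<phi> d s) (a d))"
    and pol_fact: "\<And>s a. a \<in> factored_actions D A \<Longrightarrow>
        pmf (pol s) a = (\<Prod>d<D. pmf (pold d (\<phi> d s)) (a d))"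
  shows "\<exists>q :: nat \<Rightarrow> 's \<Rightarrow> 'b \<Rightarrow> real. \<forall>s. \<forall>a\<in>factored_actions D A.
           Qpi p r \<gamma> pol s a = (\<Sum>d<D. q d s (a d))"
proof -
  define F where "F = factored_actions D A"
  have F_eq: "F = PiE {..<D} A" by (simp add: F_def factored_actions_def)
  have finF: "finite F" unfolding F_eq by (rule finite_PiE) (use A_fin in auto)
  have pol_Pi: "pol s = Pi_pmf {..<D} undefined (\<lambda>d. pold d (\<phi> d s))" for s
  proof (rule pmf_eqI)
    fix f
    show "pmf (pol s) f = pmf (Pi_pmf {..<D} undefined (\<lambda>d. pold d (\<phi> d s))) f"
    proof (cases "f \<in> F")
      case True
      then show ?thesis using pol_fact[of f s] by (subst pmf_Pi') (auto simp: F_def factored_actions_def PiE_def extensional_def)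
    next
      case False
      then have "f \<notin> set_pmf (pol s)" using pol_supp[of s] by (auto simp: F_def)
      then have l: "pmf (pol s) f = 0" by (simp add: set_pmf_eq)
      show ?thesis
      proof (cases "\<forall>x. x \<notin> {..<D} \<longrightarrow> f x = undefined")
        case True
        with False obtain d where d: "d < D" "f d \<notin> A d" by (auto simp: F_eq PiE_def extensional_def)
        then have "f d \<notin> set_pmf (pold d (\<phi> d s))" using pold_supp[of d] by auto
        then have "pmf (pold d (\<phi> d s)) (f d) = 0" by (simp add: set_pmf_eq)
        then have "(\<Prod>x\<in>{..<D}. pmf (pold x (\<phi> x s)) (f x)) = 0"
          using d by (intro prod_zero) auto
        then show ?thesis using l True by (subst pmf_Pi) auto
      next
        case False
        then show ?thesis using l by (subst pmf_Pi_outside) auto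
      qed
    qed
  qed
  have pol_marg: "map_pmf (\<lambda>a'. a' d) (pol s) = pold d (\<phi> d s)" if "d < D" for d s
    using that by (simp add: pol_Pi Pi_pmf_component)
  define \<Phi> where "\<Phi> = (\<lambda>s' :: 's. \<lambda>d. if d < D then \<phi> d s' else undefined)"
  have trans_Pi: "map_pmf \<Phi> (p st act) = Pi_pmf {..<D} undefined (\<lambda>d. pd d (\<phi> d st) (act d))"
    if act: "act \<in> F" for st act
  proof (rule pmf_eq_on_finite[where S="range \<Phi>"])
    show "finite (range \<Phi>)" by simp
    show "set_pmf (map_pmf \<Phi> (p st act)) \<subseteq> range \<Phi>" by auto
    fix w assume "w \<in> range \<Phi>"
    then obtain s' where w: "w = \<Phi> s'" by auto
    have pre: "\<Phi> -` {w} = {st. \<forall>d<D. \<phi> d st = \<phi> d s'}"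
      unfolding w \<Phi>_def by (auto simp: fun_eq_iff) metis
    have "pmf (map_pmf \<Phi> (p st act)) w = measure_pmf.prob (p st act) (\<Phi> -` {w})"
      by (simp add: pmf_map)
    also have "\<dots> = (\<Sum>st'\<in>{st. \<forall>d<D. \<phi> d st = \<phi> d s'}. pmf (p st act) st')"
      unfolding pre by (simp add: measure_measure_pmf_finite)
    also have "\<dots> = (\<Prod>d<D. pmf (pd d (\<phi> d st) (act d)) (\<phi> d s'))"
      using trans_fact[of act st s'] act by (simp add: F_def)
    also have "\<dots> = pmf (Pi_pmf {..<D} undefined (\<lambda>d. pd d (\<phi> d st) (act d))) w"
      unfolding w \<Phi>_def by (subst pmf_Pi') auto
    finally show "pmf (map_pmf \<Phi> (p st act)) w = pmf (Pi_pmf {..<D} undefined (\<lambda>d. pd d (\<phi> d st) (act d))) w" .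
  qed
  have trans_marg: "map_pmf (\<phi> d) (p st act) = pd d (\<phi> d st) (act d)" if "d < D" "act \<in> F" for d st act
  proof -
    have "map_pmf (\<phi> d) (p st act) = map_pmf (\<lambda>f. f d) (map_pmf \<Phi> (p st act))"
      using that by (simp add: map_pmf_comp \<Phi>_def)
    also have "\<dots> = pd d (\<phi> d st) (act d)" using that by (simp add: trans_Pi Pi_pmf_component)
    finally show ?thesis .
  qed
  have proj: "map_pmf (\<lambda>(st, act). (\<phi> d st, act d)) (sa_dist p pol s a n)
      = sa_dist (pd d) (pold d) (\<phi> d s) (a d) n" if "d < D" "a \<in> F" for d s a n
  proof -
    have "map_pmf (\<lambda>(st, act). (\<phi> d st, act d)) (sa_dist p pol s a n)
      = sa_dist (pd d) (pold d) (fst ((\<lambda>(st, act). (\<phi> d st, act d)) (s,a))) (snd ((\<lambda>(st, act). (\<phi> d st, act d)) (s,a))) n"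
    proof (rule sa_dist_proj[where F=F])
      show "a \<in> F" by fact
      show "set_pmf (pol s) \<subseteq> F" for s using pol_supp by (simp add: F_def)
      fix st act assume act: "act \<in> F"
      have "map_pmf (\<lambda>(st, act). (\<phi> d st, act d)) (bind_pmf (p st act) (\<lambda>s'. map_pmf (\<lambda>a'. (s', a')) (pol s')))
          = bind_pmf (p st act) (\<lambda>s'. map_pmf (\<lambda>b. (\<phi> d s', b)) (map_pmf (\<lambda>a'. a' d) (pol s')))"
        by (simp add: map_bind_pmf map_pmf_comp)
      also have "\<dots> = bind_pmf (p st act) (\<lambda>s'. (\<lambda>z. map_pmf (\<lambda>b. (z, b)) (pold d z)) (\<phi> d s'))"
        using that by (simp add: pol_marg)
      also have "\<dots> = bind_pmf (map_pmf (\<phi> d) (p st act)) (\<lambda>z. map_pmf (\<lambda>b. (z, b)) (pold d z))"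
        by (simp add: bind_map_pmf)
      also have "\<dots> = bind_pmf (pd d (\<phi> d st) (act d)) (\<lambda>z. map_pmf (\<lambda>b. (z, b)) (pold d z))"
        using that act by (simp add: trans_marg)
      finally show "map_pmf (\<lambda>(st, act). (\<phi> d st, act d)) (bind_pmf (p st act) (\<lambda>s'. map_pmf (\<lambda>a'. (s', a')) (pol s')))
          = (case (\<lambda>(st, act). (\<phi> d st, act d)) (st, act) of (z, b) \<Rightarrow> bind_pmf (pd d z b) (\<lambda>s'. map_pmf (\<lambda>a'. (s', a')) (pold d s')))"
        by simp
    qed
    then show ?thesis by simp
  qed
  define e where "e d n z b = measure_pmf.expectation (sa_dist (pd d) (pold d) z b n) (\<lambda>(z, b). rd d z b)" for d n z b
  define q where "q d s b = (\<Sum>n. \<gamma> ^ n * e d n (\<phi> d s) b)" for d s b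
  define g where "g d x = rd d (\<phi> d (fst x)) (snd x d)" for d and x :: "'s \<times> (nat \<Rightarrow> 'b)"
  define U where "U = (UNIV :: 's set) \<times> F"
  have finU: "finite U" using finF by (simp add: U_def)
  show ?thesis
  proof (intro exI[of _ q] allI ballI)
    fix s a assume aA: "a \<in> factored_actions D A"
    then have aF: "a \<in> F" by (simp add: F_def)
    have supp: "set_pmf (sa_dist p pol s a n) \<subseteq> U" for n
      using sa_dist_supp[of a F pol p s n] aF pol_supp by (auto simp: U_def F_def)
    have int: "integrable (measure_pmf (sa_dist p pol s a n)) f" for n and f :: "_ \<Rightarrow> real"
      by (rule integrable_measure_pmf_finite) (use supp finU finite_subset in blast)
    have eg: "e d n (\<phi> d s) (a d) = measure_pmf.expectation (sa_dist p pol s a n) (g d)" if "d < D" for d n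
      using proj[OF that aF, of s n, symmetric] by (simp add: e_def g_def[abs_def] case_prod_beta)
    have E: "measure_pmf.expectation (sa_dist p pol s a n) (\<lambda>(st, act). r st act)
        = (\<Sum>d<D. e d n (\<phi> d s) (a d))" for n
    proof -
      have "measure_pmf.expectation (sa_dist p pol s a n) (\<lambda>(st, act). r st act)
          = measure_pmf.expectation (sa_dist p pol s a n) (\<lambda>x. \<Sum>d<D. g d x)"
      proof (rule integral_cong_AE)
        show "AE x in measure_pmf (sa_dist p pol s a n). (case x of (st, act) \<Rightarrow> r st act) = (\<Sum>d<D. g d x)"
          unfolding AE_measure_pmf_iff
        proof
          fix x assume "x \<in> set_pmf (sa_dist p pol s a n)"
          then have "snd x \<in> factored_actions D A" using supp[of n] by (auto simp: U_def F_def)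
          then show "(case x of (st, act) \<Rightarrow> r st act) = (\<Sum>d<D. g d x)"
            using rew_fact[of "snd x" "fst x"] by (simp add: g_def case_prod_beta)
        qed
      qed auto
      also have "\<dots> = (\<Sum>d<D. measure_pmf.expectation (sa_dist p pol s a n) (g d))"
        by (simp add: int)
      also have "\<dots> = (\<Sum>d<D. e d n (\<phi> d s) (a d))"
        by (rule sum.cong) (auto simp: eg)
      finally show ?thesis .
    qed
    have summ: "summable (\<lambda>n. \<gamma> ^ n * e d n (\<phi> d s) (a d))" if "d < D" for d
    proof (rule summable_comparison_test)
      define M where "M = (\<Sum>x\<in>U. \<bar>g d x\<bar>)"
      have bnd: "\<bar>e d n (\<phi> d s) (a d)\<bar> \<le> M" for n
      proof -
        have "e d n (\<phi> d s) (a d) = (\<Sum>x\<in>U. g d x * pmf (sa_dist p pol s a n) x)"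
          unfolding eg[OF that] by (rule integral_measure_pmf_real[OF finU]) (use supp in blast)
        also have "\<bar>\<dots>\<bar> \<le> (\<Sum>x\<in>U. \<bar>g d x * pmf (sa_dist p pol s a n) x\<bar>)" by (rule sum_abs)
        also have "\<dots> \<le> M" unfolding M_def
          by (rule sum_mono) (auto simp: abs_mult intro!: mult_left_le pmf_le_1)
        finally show ?thesis .
      qed
      show "\<exists>N. \<forall>n\<ge>N. norm (\<gamma> ^ n * e d n (\<phi> d s) (a d)) \<le> \<gamma> ^ n * M"
        using bnd gamma by (auto simp: abs_mult intro!: mult_left_mono)
      show "summable (\<lambda>n. \<gamma> ^ n * M)"
        using gamma by (intro summable_mult2 summable_geometric) auto
    qed
    have "Qpi p r \<gamma> pol s a = (\<Sum>n. \<Sum>d<D. \<gamma> ^ n * e d n (\<phi> d s) (a d))"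
      unfolding Qpi_def E by (simp add: sum_distrib_left)
    also have "\<dots> = (\<Sum>d<D. \<Sum>n. \<gamma> ^ n * e d n (\<phi> d s) (a d))"
      by (rule suminf_sum) (use summ in auto)
    also have "\<dots> = (\<Sum>d<D. q d s (a d))" by (simp add: q_def)
    finally show "Qpi p r \<gamma> pol s a = (\<Sum>d<D. q d s (a d))" .
  qed
qed

end
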